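(* Let $\mu\in(0,1]$ and let $G$, $H$ be two $k$-uniform hypergraphs such that there exists a homomorphism $\psi$ from $G$ to $H$. If $H$ has the $\mu$-fractional property, then so does $G$. In particular, if a $k$-uniform hypergraph has the $\mu$-fractional property, then so do all of its subhypergraphs.
   Context: A homomorphism from $G$ to $H$ is a map $\psi\colon V(G)\to V(H)$ such that $\psi[e]\in E(H)$ for every edge $e\in E(G)$. A $k$-uniform hypergraph $H$ has the $\mu$-fractional property if for every family $(w_i)_{i\in V(H)}$ of nonnegative real numbers there exists an independent set $Z\subseteq V(H)$ (a set containing no edge of $H$) such that $\sum_{i\in Z}w_i\geq\mu\sum_{i\in V(H)}w_i$. *)

theory Defs
  imports Complex_Main "HOL-Library.FuncSet"
begin

definition k_uniform_hypergraph :: "nat \<Rightarrow> 'a set \<Rightarrow> 'a set set \<Rightarrow> bool" where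
  "k_uniform_hypergraph k V E \<longleftrightarrow> finite V \<and> (\<forall>e\<in>E. e \<subseteq> V \<and> card e = k)"

definition hypergraph_hom :: "('a \<Rightarrow> 'b) \<Rightarrow> 'a set \<Rightarrow> 'a set set \<Rightarrow> 'b set \<Rightarrow> 'b set set \<Rightarrow> bool" where
  "hypergraph_hom psi VG EG VH EH \<longleftrightarrow> psi \<in> VG \<rightarrow> VH \<and> (\<forall>e\<in>EG. psi ` e \<in> EH)"

definition independent_set :: "'a set \<Rightarrow> 'a set set \<Rightarrow> 'a set \<Rightarrow> bool" where
  "independent_set V E Z \<longleftrightarrow> Z \<subseteq> V \<and> (\<forall>e\<in>E. \<not> e \<subseteq> Z)"

definition fractional_property :: "real \<Rightarrow> 'a set \<Rightarrow> 'a set set \<Rightarrow> bool" where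
  "fractional_property \<mu> V E \<longleftrightarrow>
     (\<forall>w :: 'a \<Rightarrow> real. (\<forall>i\<in>V. 0 \<le> w i) \<longrightarrow>
        (\<exists>Z. independent_set V E Z \<and> (\<Sum>i\<in>Z. w i) \<ge> \<mu> * (\<Sum>i\<in>V. w i)))"

end

theory Submission
  imports Defs
begin

lemma hom_part:
  fixes \<mu> :: real
  assumes fG: "finite VG" and fH: "finite VH"
    and hom: "hypergraph_hom psi VG EG VH EH"
    and fp: "fractional_property \<mu> VH EH"
  shows "fractional_property \<mu> VG EG"
  unfolding fractional_property_def
proof (intro allI impI)
  fix w :: "'a \<Rightarrow> real" assume w: "\<forall>i\<in>VG. 0 \<le> w i"
  define w' where "w' j = (\<Sum>i\<in>{i\<in>VG. psi i = j}. w i)" for j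
  have "\<forall>j\<in>VH. 0 \<le> w' j" unfolding w'_def using w by (auto intro: sum_nonneg)
  then obtain Z' where Z': "independent_set VH EH Z'" and s: "(\<Sum>j\<in>Z'. w' j) \<ge> \<mu> * (\<Sum>j\<in>VH. w' j)"
    using fp unfolding fractional_property_def by blast
  have map: "psi \<in> VG \<rightarrow> VH" and edges: "\<forall>e\<in>EG. psi ` e \<in> EH"
    using hom unfolding hypergraph_hom_def by auto
  have Z'sub: "Z' \<subseteq> VH" and Z'ind: "\<forall>e\<in>EH. \<not> e \<subseteq> Z'"
    using Z' unfolding independent_set_def by auto
  have fZ': "finite Z'" using Z'sub fH finite_subset by blast
  define Z where "Z = {i\<in>VG. psi i \<in> Z'}"
  have "independent_set VG EG Z"
    unfolding independent_set_def
  proof safe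
    fix x assume "x \<in> Z" then show "x \<in> VG" unfolding Z_def by auto
  next
    fix e assume e: "e \<in> EG" "e \<subseteq> Z"
    then have "psi ` e \<subseteq> Z'" unfolding Z_def by auto
    then show False using Z'ind edges e by blast
  qed
  moreover have "(\<Sum>i\<in>Z. w i) = (\<Sum>j\<in>Z'. w' j)"
  proof -
    have "(\<Sum>i\<in>Z. w i) = (\<Sum>j\<in>Z'. \<Sum>i\<in>{x\<in>Z. psi x = j}. w i)"
      by (rule sum.group[symmetric]) (use fG fZ' in \<open>auto simp: Z_def\<close>)
    also have "\<dots> = (\<Sum>j\<in>Z'. w' j)"
      by (rule sum.cong) (auto simp: w'_def Z_def intro!: sum.cong)
    finally show ?thesis .
  qed
  moreover have "(\<Sum>i\<in>VG. w i) = (\<Sum>j\<in>VH. w' j)"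
    unfolding w'_def
    by (rule sum.group[symmetric]) (use fG fH map in auto)
  ultimately show "\<exists>Z. independent_set VG EG Z \<and> \<mu> * sum w VG \<le> sum w Z"
    using s by metis
qed

lemma sub_part:
  fixes \<mu> :: real
  assumes fH: "finite VH"
    and fp: "fractional_property \<mu> VH EH"
    and sub: "V' \<subseteq> VH" "E' \<subseteq> EH"
  shows "fractional_property \<mu> V' E'"
  unfolding fractional_property_def
proof (intro allI impI)
  fix w :: "'a \<Rightarrow> real" assume w: "\<forall>i\<in>V'. 0 \<le> w i"
  define w' where "w' j = (if j \<in> V' then w j else 0)" for j
  have "\<forall>j\<in>VH. 0 \<le> w' j" unfolding w'_def using w by auto
  then obtain Z where Z: "independent_set VH EH Z" and s: "(\<Sum>j\<in>Z. w' j) \<ge> \<mu> * (\<Sum>j\<in>VH. w' j)"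
    using fp unfolding fractional_property_def by blast
  have Zsub: "Z \<subseteq> VH" and Zind: "\<forall>e\<in>EH. \<not> e \<subseteq> Z"
    using Z unfolding independent_set_def by auto
  have fZ: "finite Z" using Zsub fH finite_subset by blast
  have "independent_set V' E' (Z \<inter> V')"
    unfolding independent_set_def using Zind sub by auto
  moreover have "(\<Sum>j\<in>Z. w' j) = (\<Sum>j\<in>Z \<inter> V'. w j)"
    unfolding w'_def using fZ by (simp add: sum.If_cases)
  moreover have "(\<Sum>j\<in>VH. w' j) = (\<Sum>j\<in>V'. w j)"
    unfolding w'_def using fH sub by (simp add: sum.If_cases Int_absorb1)
  ultimately show "\<exists>Z. independent_set V' E' Z \<and> \<mu> * sum w V' \<le> sum w Z"
    using s by metis
qed

theorem lemma3p2:
  fixes \<mu> :: real and k :: nat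
    and VG :: "'a set" and EG :: "'a set set"
    and VH :: "'b set" and EH :: "'b set set"
    and psi :: "'a \<Rightarrow> 'b"
  assumes "0 < \<mu>" and "\<mu> \<le> 1"
    and "k_uniform_hypergraph k VG EG" and "k_uniform_hypergraph k VH EH"
    and "hypergraph_hom psi VG EG VH EH"
    and "fractional_property \<mu> VH EH"
  shows "fractional_property \<mu> VG EG \<and>
         (\<forall>V' E'. V' \<subseteq> VH \<and> E' \<subseteq> EH \<and> (\<forall>e\<in>E'. e \<subseteq> V') \<longrightarrow>
                  fractional_property \<mu> V' E')"
proof -
  have fG: "finite VG" and fH: "finite VH"
    using assms(3,4) unfolding k_uniform_hypergraph_def by auto
  show ?thesis
    using hom_part[OF fG fH assms(5,6)] sub_part[OF fH assms(6)] by blast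
qed

end
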